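(* Let $\Delta_+=\{\delta-\gamma:\gamma\in\Sigma^+_{\beta,0}\cap\Sigma_{\delta,1}\}$ and $\Delta_-=\{\delta+\gamma:\gamma\in\Sigma^+_{\beta,0}\cap\Sigma_{\delta,-1}\}$. Then $\Sigma_{\beta,1}\cap\Sigma_{\delta,1}=\Delta_+\sqcup\Delta_-$, $\Sigma_{\beta,1}\cap\Sigma_{\delta,0}=\{\beta-\gamma:\gamma\in\Sigma_{\beta,1}\cap\Sigma_{\delta,1}\}$, $\Sigma_{\beta,1}\cap\Sigma_{\delta,2}=\{\delta\}$, and $\Sigma_{\beta,1}\cap\Sigma_{\delta,-1}=\{\beta-\delta\}$.
   Context: Let $\mathfrak g$ be a compact simple Lie algebra not isomorphic to $\mathfrak{sp}(n)$, $\mathfrak a$ a maximal abelian subalgebra, $\Sigma$ the root system of $\mathfrak g^{\mathbb C}$ w.r.t. $\mathfrak a^{\mathbb C}$ with inner product $(\,,\,)$ induced by the Killing form, $\Sigma^+$ a positive system with highest root $\beta$. For $\gamma\in\Sigma$ and $n\in\mathbb Z$ let $\Sigma_{\gamma,n}=\{\alpha\in\Sigma:2(\gamma,\alpha)/(\gamma,\gamma)=n\}$ and $\Sigma^+_{\gamma,n}=\Sigma_{\gamma,n}\cap\Sigma^+$. Fix $\delta\in\Sigma_{\beta,1}$ with $(\delta,\delta)=(\beta,\beta)$. *)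

theory Defs
  imports "HOL-Analysis.Analysis"
begin

text \<open>Abstract (finite, crystallographic, reduced) root systems in a Euclidean space.
  The inner product plays the role of the one induced by the Killing form.\<close>

definition cartan_int :: "'a::euclidean_space \<Rightarrow> 'a \<Rightarrow> real" where
  "cartan_int \<gamma> \<alpha> = 2 * (\<gamma> \<bullet> \<alpha>) / (\<gamma> \<bullet> \<gamma>)"

definition root_system :: "'a::euclidean_space set \<Rightarrow> bool" where
  "root_system R \<longleftrightarrow>
     finite R \<and> 0 \<notin> R \<and> span R = UNIV \<and>
     (\<forall>\<alpha>\<in>R. \<forall>\<beta>\<in>R. \<beta> - cartan_int \<alpha> \<beta> *\<^sub>R \<alpha> \<in> R) \<and>
     (\<forall>\<alpha>\<in>R. \<forall>\<beta>\<in>R. cartan_int \<alpha> \<beta> \<in> \<int>) \<and>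
     (\<forall>\<alpha>\<in>R. \<forall>c::real. c *\<^sub>R \<alpha> \<in> R \<longrightarrow> c = 1 \<or> c = -1)"

definition irreducible_root_system :: "'a::euclidean_space set \<Rightarrow> bool" where
  "irreducible_root_system R \<longleftrightarrow> root_system R \<and>
     \<not> (\<exists>A B. A \<noteq> {} \<and> B \<noteq> {} \<and> A \<union> B = R \<and> A \<inter> B = {} \<and>
            (\<forall>a\<in>A. \<forall>b\<in>B. a \<bullet> b = 0))"

definition positive_system :: "'a::euclidean_space set \<Rightarrow> 'a set \<Rightarrow> bool" where
  "positive_system R P \<longleftrightarrow>
     (\<exists>v. (\<forall>\<alpha>\<in>R. v \<bullet> \<alpha> \<noteq> 0) \<and> P = {\<alpha>\<in>R. v \<bullet> \<alpha> > 0})"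

definition highest_root :: "'a::euclidean_space set \<Rightarrow> 'a set \<Rightarrow> 'a \<Rightarrow> bool" where
  "highest_root R P \<beta> \<longleftrightarrow> \<beta> \<in> R \<and>
     (\<forall>\<alpha>\<in>R. \<exists>c. (\<forall>\<gamma>\<in>P. c \<gamma> \<ge> (0::real)) \<and> \<beta> - \<alpha> = (\<Sum>\<gamma>\<in>P. c \<gamma> *\<^sub>R \<gamma>))"

definition Sig :: "'a::euclidean_space set \<Rightarrow> 'a \<Rightarrow> int \<Rightarrow> 'a set" where
  "Sig R \<gamma> n = {\<alpha>\<in>R. cartan_int \<gamma> \<alpha> = of_int n}"

end

theory Submission
  imports Defs
begin

lemma rs_refl: "root_system R \<Longrightarrow> a \<in> R \<Longrightarrow> b \<in> R \<Longrightarrow> b - cartan_int a b *\<^sub>R a \<in> R"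
  unfolding root_system_def by blast

lemma rs_int: "root_system R \<Longrightarrow> a \<in> R \<Longrightarrow> b \<in> R \<Longrightarrow> cartan_int a b \<in> \<int>"
  unfolding root_system_def by blast

lemma rs_nz: "root_system R \<Longrightarrow> a \<in> R \<Longrightarrow> a \<bullet> a > 0"
  unfolding root_system_def by (metis inner_gt_zero_iff)

lemma rs_neg: assumes "root_system R" "a \<in> R" shows "- a \<in> R"
proof -
  have "a \<bullet> a > 0" using rs_nz assms by blast
  hence "cartan_int a a = 2" unfolding cartan_int_def by simp
  moreover have "a - 2 *\<^sub>R a = - a" by (simp add: scaleR_2)
  ultimately show ?thesis using rs_refl[OF assms assms(2)] by metis
qed

lemma rs_len: assumes "root_system R" "b \<in> R" "a \<in> R" "2 * (b \<bullet> a) = b \<bullet> b"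
  shows "a \<bullet> a \<le> b \<bullet> b"
proof -
  have pa: "a \<bullet> a > 0" and pb: "b \<bullet> b > 0" using rs_nz assms by blast+
  have c: "cartan_int a b = (b \<bullet> b) / (a \<bullet> a)" unfolding cartan_int_def
    using assms(4) by (simp add: inner_commute)
  obtain k where k: "cartan_int a b = of_int k" using rs_int[OF assms(1,3,2)] Ints_cases by metis
  have "of_int k > (0::real)" using c k pa pb by simp
  hence "of_int k \<ge> (1::real)" by simp
  hence "1 * (a \<bullet> a) \<le> of_int k * (a \<bullet> a)" using pa by (intro mult_right_mono) auto
  moreover have "of_int k * (a \<bullet> a) = b \<bullet> b" using c k pa by (simp add: field_simps)
  ultimately show ?thesis by simp
qed

lemma ci_diff: "cartan_int g (a - b) = cartan_int g a - cartan_int g b"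
  unfolding cartan_int_def by (simp add: inner_diff_right diff_divide_distrib algebra_simps)

lemma ci_add: "cartan_int g (a + b) = cartan_int g a + cartan_int g b"
  unfolding cartan_int_def by (simp add: inner_add_right add_divide_distrib algebra_simps)

lemma ci_self: "g \<bullet> g \<noteq> 0 \<Longrightarrow> cartan_int g g = 2"
  unfolding cartan_int_def by simp

lemma Sig_iff: "x \<in> Sig R g n \<longleftrightarrow> x \<in> R \<and> cartan_int g x = of_int n"
  unfolding Sig_def by simp

theorem lemma3p4:
  fixes R P :: "'a::euclidean_space set" and \<beta> \<delta> :: 'a
  assumes "irreducible_root_system R"
    and "positive_system R P"
    and "highest_root R P \<beta>"
    and "\<delta> \<in> Sig R \<beta> 1"
    and "\<delta> \<bullet> \<delta> = \<beta> \<bullet> \<beta>"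
  shows "Sig R \<beta> 1 \<inter> Sig R \<delta> 1 =
           {\<delta> - \<gamma> | \<gamma>. \<gamma> \<in> P \<inter> Sig R \<beta> 0 \<inter> Sig R \<delta> 1}
           \<union> {\<delta> + \<gamma> | \<gamma>. \<gamma> \<in> P \<inter> Sig R \<beta> 0 \<inter> Sig R \<delta> (-1)}
       \<and> {\<delta> - \<gamma> | \<gamma>. \<gamma> \<in> P \<inter> Sig R \<beta> 0 \<inter> Sig R \<delta> 1}
           \<inter> {\<delta> + \<gamma> | \<gamma>. \<gamma> \<in> P \<inter> Sig R \<beta> 0 \<inter> Sig R \<delta> (-1)} = {}
       \<and> Sig R \<beta> 1 \<inter> Sig R \<delta> 0 = {\<beta> - \<gamma> | \<gamma>. \<gamma> \<in> Sig R \<beta> 1 \<inter> Sig R \<delta> 1}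
       \<and> Sig R \<beta> 1 \<inter> Sig R \<delta> 2 = {\<delta>}
       \<and> Sig R \<beta> 1 \<inter> Sig R \<delta> (-1) = {\<beta> - \<delta>}"
proof -
  have rs: "root_system R" using assms(1) irreducible_root_system_def by blast
  have bR: "\<beta> \<in> R" using assms(3) highest_root_def by blast
  obtain v where v: "\<forall>\<alpha>\<in>R. v \<bullet> \<alpha> \<noteq> 0" and Pdef: "P = {\<alpha>\<in>R. v \<bullet> \<alpha> > 0}"
    using assms(2) positive_system_def by blast
  have dR: "\<delta> \<in> R" and cbd: "cartan_int \<beta> \<delta> = 1" using assms(4) by (auto simp: Sig_iff)
  define L where "L = \<beta> \<bullet> \<beta>"
  have Lp: "L > 0" using rs_nz[OF rs bR] L_def by simp
  have bd: "\<beta> \<bullet> \<delta> = L / 2" using cbd Lp unfolding cartan_int_def L_def by (simp add: field_simps)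
  have dd: "\<delta> \<bullet> \<delta> = L" using assms(5) L_def by simp
  have cdb: "cartan_int \<delta> \<beta> = 1" unfolding cartan_int_def using bd dd Lp by (simp add: inner_commute)
  have cdd: "cartan_int \<delta> \<delta> = 2" using ci_self[of \<delta>] dd Lp by simp
  have cbb: "cartan_int \<beta> \<beta> = 2" using ci_self[of \<beta>] Lp L_def by simp
  have S1: "\<And>\<alpha>. \<alpha> \<in> Sig R \<beta> 1 \<Longrightarrow> \<alpha> \<in> R \<and> 2 * (\<beta> \<bullet> \<alpha>) = L"
    using Lp unfolding Sig_iff cartan_int_def L_def by (auto simp: field_simps)
  have cdx: "\<And>\<alpha> n. cartan_int \<delta> \<alpha> = n \<longleftrightarrow> 2 * (\<delta> \<bullet> \<alpha>) = n * L"
    using Lp dd unfolding cartan_int_def by (auto simp: field_simps)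
  have p1: "Sig R \<beta> 1 \<inter> Sig R \<delta> 1 =
           {\<delta> - \<gamma> | \<gamma>. \<gamma> \<in> P \<inter> Sig R \<beta> 0 \<inter> Sig R \<delta> 1}
           \<union> {\<delta> + \<gamma> | \<gamma>. \<gamma> \<in> P \<inter> Sig R \<beta> 0 \<inter> Sig R \<delta> (-1)}"
  proof (intro equalityI subsetI)
    fix \<alpha> assume a: "\<alpha> \<in> Sig R \<beta> 1 \<inter> Sig R \<delta> 1"
    hence aR: "\<alpha> \<in> R" and c1: "cartan_int \<beta> \<alpha> = 1" and c2: "cartan_int \<delta> \<alpha> = 1"
      by (auto simp: Sig_iff)
    have "\<alpha> - \<delta> \<in> R" using rs_refl[OF rs dR aR] c2 by simp
    hence gR: "\<delta> - \<alpha> \<in> R" using rs_neg[OF rs] by fastforce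
    have g0: "cartan_int \<beta> (\<delta> - \<alpha>) = 0" using cbd c1 by (simp add: ci_diff)
    have g1: "cartan_int \<delta> (\<delta> - \<alpha>) = 1" using cdd c2 by (simp add: ci_diff)
    show "\<alpha> \<in> {\<delta> - \<gamma> | \<gamma>. \<gamma> \<in> P \<inter> Sig R \<beta> 0 \<inter> Sig R \<delta> 1}
           \<union> {\<delta> + \<gamma> | \<gamma>. \<gamma> \<in> P \<inter> Sig R \<beta> 0 \<inter> Sig R \<delta> (-1)}"
    proof (cases "v \<bullet> (\<delta> - \<alpha>) > 0")
      case True
      hence "\<delta> - \<alpha> \<in> P \<inter> Sig R \<beta> 0 \<inter> Sig R \<delta> 1" using gR g0 g1 Pdef by (auto simp: Sig_iff)
      hence "\<alpha> \<in> {\<delta> - \<gamma> | \<gamma>. \<gamma> \<in> P \<inter> Sig R \<beta> 0 \<inter> Sig R \<delta> 1}"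
        by (intro CollectI exI[of _ "\<delta> - \<alpha>"]) simp
      thus ?thesis by blast
    next
      case False
      hence "v \<bullet> (\<delta> - \<alpha>) < 0" using v gR by force
      hence "v \<bullet> (\<alpha> - \<delta>) > 0" by (simp add: inner_diff_right)
      moreover have "cartan_int \<beta> (\<alpha> - \<delta>) = 0" "cartan_int \<delta> (\<alpha> - \<delta>) = -1"
        using cbd c1 cdd c2 by (simp_all add: ci_diff)
      ultimately have "\<alpha> - \<delta> \<in> P \<inter> Sig R \<beta> 0 \<inter> Sig R \<delta> (-1)"
        using \<open>\<alpha> - \<delta> \<in> R\<close> Pdef by (auto simp: Sig_iff)
      hence "\<alpha> \<in> {\<delta> + \<gamma> | \<gamma>. \<gamma> \<in> P \<inter> Sig R \<beta> 0 \<inter> Sig R \<delta> (-1)}"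
        by (intro CollectI exI[of _ "\<alpha> - \<delta>"]) simp
      thus ?thesis by blast
    qed
  next
    fix \<alpha> assume "\<alpha> \<in> {\<delta> - \<gamma> | \<gamma>. \<gamma> \<in> P \<inter> Sig R \<beta> 0 \<inter> Sig R \<delta> 1}
           \<union> {\<delta> + \<gamma> | \<gamma>. \<gamma> \<in> P \<inter> Sig R \<beta> 0 \<inter> Sig R \<delta> (-1)}"
    then consider (m) \<gamma> where "\<alpha> = \<delta> - \<gamma>" "\<gamma> \<in> R" "cartan_int \<beta> \<gamma> = 0" "cartan_int \<delta> \<gamma> = 1"
      | (p) \<gamma> where "\<alpha> = \<delta> + \<gamma>" "\<gamma> \<in> R" "cartan_int \<beta> \<gamma> = 0" "cartan_int \<delta> \<gamma> = -1"
      by (auto simp: Sig_iff)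
    thus "\<alpha> \<in> Sig R \<beta> 1 \<inter> Sig R \<delta> 1"
    proof cases
      case m
      have "\<gamma> - \<delta> \<in> R" using rs_refl[OF rs dR m(2)] m(4) by simp
      hence "\<alpha> \<in> R" using rs_neg[OF rs] m(1) by fastforce
      thus ?thesis using m cbd cdd by (auto simp: Sig_iff ci_diff)
    next
      case p
      have "\<gamma> + \<delta> \<in> R" using rs_refl[OF rs dR p(2)] p(4) by simp
      hence "\<alpha> \<in> R" using p(1) by (simp add: add.commute)
      thus ?thesis using p cbd cdd by (auto simp: Sig_iff ci_add)
    qed
  qed
  have p2: "{\<delta> - \<gamma> | \<gamma>. \<gamma> \<in> P \<inter> Sig R \<beta> 0 \<inter> Sig R \<delta> 1}
           \<inter> {\<delta> + \<gamma> | \<gamma>. \<gamma> \<in> P \<inter> Sig R \<beta> 0 \<inter> Sig R \<delta> (-1)} = {}"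
  proof -
    { fix g1 g2 assume "g1 \<in> P" "g2 \<in> P" "\<delta> - g1 = \<delta> + g2"
      hence "g2 = - g1" by (metis add_left_cancel diff_conv_add_uminus)
      hence False using \<open>g1 \<in> P\<close> \<open>g2 \<in> P\<close> Pdef by auto }
    thus ?thesis by blast
  qed
  have p3: "Sig R \<beta> 1 \<inter> Sig R \<delta> 0 = {\<beta> - \<gamma> | \<gamma>. \<gamma> \<in> Sig R \<beta> 1 \<inter> Sig R \<delta> 1}"
  proof -
    have key: "\<And>\<alpha>. \<alpha> \<in> Sig R \<beta> 1 \<Longrightarrow> \<beta> - \<alpha> \<in> Sig R \<beta> 1 \<and> cartan_int \<delta> (\<beta> - \<alpha>) = 1 - cartan_int \<delta> \<alpha>"
    proof -
      fix \<alpha> assume a: "\<alpha> \<in> Sig R \<beta> 1"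
      hence aR: "\<alpha> \<in> R" and c: "cartan_int \<beta> \<alpha> = 1" by (auto simp: Sig_iff)
      have "\<alpha> - \<beta> \<in> R" using rs_refl[OF rs bR aR] c by simp
      hence "\<beta> - \<alpha> \<in> R" using rs_neg[OF rs] by fastforce
      thus "\<beta> - \<alpha> \<in> Sig R \<beta> 1 \<and> cartan_int \<delta> (\<beta> - \<alpha>) = 1 - cartan_int \<delta> \<alpha>"
        using cbb c cdb by (auto simp: Sig_iff ci_diff)
    qed
    show ?thesis
    proof (intro equalityI subsetI)
      fix \<alpha> assume "\<alpha> \<in> Sig R \<beta> 1 \<inter> Sig R \<delta> 0"
      hence "\<alpha> \<in> Sig R \<beta> 1" "cartan_int \<delta> \<alpha> = 0" by (auto simp: Sig_iff)
      hence "\<beta> - \<alpha> \<in> Sig R \<beta> 1 \<inter> Sig R \<delta> 1" using key by (auto simp: Sig_iff)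
      thus "\<alpha> \<in> {\<beta> - \<gamma> | \<gamma>. \<gamma> \<in> Sig R \<beta> 1 \<inter> Sig R \<delta> 1}"
        by (intro CollectI exI[of _ "\<beta> - \<alpha>"]) simp
    next
      fix \<alpha> assume "\<alpha> \<in> {\<beta> - \<gamma> | \<gamma>. \<gamma> \<in> Sig R \<beta> 1 \<inter> Sig R \<delta> 1}"
      then obtain g where "\<alpha> = \<beta> - g" "g \<in> Sig R \<beta> 1" "cartan_int \<delta> g = 1" by (auto simp: Sig_iff)
      thus "\<alpha> \<in> Sig R \<beta> 1 \<inter> Sig R \<delta> 0" using key by (auto simp: Sig_iff)
    qed
  qed
  have len: "\<And>\<alpha>. \<alpha> \<in> Sig R \<beta> 1 \<Longrightarrow> \<alpha> \<bullet> \<alpha> \<le> L"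
    using S1 rs_len[OF rs bR] L_def by auto
  have p4: "Sig R \<beta> 1 \<inter> Sig R \<delta> 2 = {\<delta>}"
  proof (intro equalityI subsetI)
    fix \<alpha> assume a: "\<alpha> \<in> Sig R \<beta> 1 \<inter> Sig R \<delta> 2"
    hence "\<alpha> \<bullet> \<alpha> \<le> L" using len by auto
    moreover have "2 * (\<delta> \<bullet> \<alpha>) = 2 * L" using a cdx[of \<alpha> 2] by (auto simp: Sig_iff)
    ultimately have "(\<alpha> - \<delta>) \<bullet> (\<alpha> - \<delta>) \<le> 0" using dd
      by (simp add: inner_diff_left inner_diff_right inner_commute)
    hence "\<alpha> - \<delta> = 0" by (meson inner_gt_zero_iff not_le)
    thus "\<alpha> \<in> {\<delta>}" by simp
  next
    fix \<alpha> assume "\<alpha> \<in> {\<delta>}"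
    thus "\<alpha> \<in> Sig R \<beta> 1 \<inter> Sig R \<delta> 2" using assms(4) cdd dR by (auto simp: Sig_iff)
  qed
  have p5: "Sig R \<beta> 1 \<inter> Sig R \<delta> (-1) = {\<beta> - \<delta>}"
  proof (intro equalityI subsetI)
    fix \<alpha> assume a: "\<alpha> \<in> Sig R \<beta> 1 \<inter> Sig R \<delta> (-1)"
    hence "\<alpha> \<bullet> \<alpha> \<le> L" using len by auto
    moreover have "2 * (\<delta> \<bullet> \<alpha>) = - L" using a cdx[of \<alpha> "-1"] by (auto simp: Sig_iff)
    moreover have "2 * (\<beta> \<bullet> \<alpha>) = L" using a S1 by auto
    ultimately have "(\<alpha> - (\<beta> - \<delta>)) \<bullet> (\<alpha> - (\<beta> - \<delta>)) \<le> 0" using dd bd L_def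
      by (simp add: inner_diff_left inner_diff_right inner_commute)
    hence "\<alpha> - (\<beta> - \<delta>) = 0" by (meson inner_gt_zero_iff not_le)
    thus "\<alpha> \<in> {\<beta> - \<delta>}" by simp
  next
    fix \<alpha> assume "\<alpha> \<in> {\<beta> - \<delta>}"
    hence e: "\<alpha> = \<beta> - \<delta>" by simp
    have "\<delta> - \<beta> \<in> R" using rs_refl[OF rs bR dR] cbd by simp
    hence "\<alpha> \<in> R" using rs_neg[OF rs] e by fastforce
    thus "\<alpha> \<in> Sig R \<beta> 1 \<inter> Sig R \<delta> (-1)" using e cbb cbd cdb cdd by (auto simp: Sig_iff ci_diff)
  qed
  show ?thesis using p1 p2 p3 p4 p5 by blast
qed

end
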